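(* For $n\ge1$, with $a_0=a_1=1$ and $a_m=a_{m-1}+2(m-1)a_{m-2}$ for $m>1$, the number $a_{2n}$ (the rank of $\mathrm{SBr}(\mathrm{A}_{2n-1})$) satisfies $$a_{2n}=\sum_{i=0}^{n}\left(\sum_{\substack{p,q\ge0\\ p+2q=i}}\frac{n!}{p!\,q!\,(n-i)!}\right)^{2}2^{n-i}(n-i)!.$$
   Context: $\mathrm{SBr}(\mathrm{A}_{2n-1})$ is the $\mathbb{Z}[\delta^{\pm1}]$-span, inside the classical Brauer algebra on $2n$ strands, of the Brauer diagrams (perfect matchings of the dots $(j,1),(j,0)$, $1\le j\le 2n$) invariant under the reflection $(j,\epsilon)\mapsto(2n+1-j,\epsilon)$. *)

theory Defs
  imports Complex_Main
begin

fun seqA :: "nat \<Rightarrow> nat" where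
  "seqA 0 = 1"
| "seqA (Suc 0) = 1"
| "seqA (Suc (Suc m)) = seqA (Suc m) + 2 * Suc m * seqA m"

definition dots :: "nat \<Rightarrow> (nat \<times> nat) set" where
  "dots n = {1..2*n} \<times> {0,1}"

definition perfect_matching :: "'a set \<Rightarrow> 'a set set \<Rightarrow> bool" where
  "perfect_matching V M \<longleftrightarrow>
     (\<forall>e\<in>M. e \<subseteq> V \<and> card e = 2) \<and> (\<forall>v\<in>V. \<exists>!e. e \<in> M \<and> v \<in> e)"

definition brauer_diagrams :: "nat \<Rightarrow> (nat \<times> nat) set set set" where
  "brauer_diagrams n = {M. perfect_matching (dots n) M}"

definition refl_dot :: "nat \<Rightarrow> nat \<times> nat \<Rightarrow> nat \<times> nat" where
  "refl_dot n x = (2*n + 1 - fst x, snd x)"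

text \<open>Reflection-invariant Brauer diagrams: the Z[delta^(+-1)]-basis of SBr(A_(2n-1)).\<close>
definition sym_brauer_diagrams :: "nat \<Rightarrow> (nat \<times> nat) set set set" where
  "sym_brauer_diagrams n =
     {M \<in> brauer_diagrams n. (\<lambda>e. refl_dot n ` e) ` M = M}"

definition rank_SBr :: "nat \<Rightarrow> nat" where
  "rank_SBr n = card (sym_brauer_diagrams n)"

end

theory Submission
  imports Defs
begin


definition bb :: "int \<Rightarrow> real" where
  "bb j = (if j < 0 then 0 else real (seqA (nat j)) / fact (nat j))"

lemma bb_neg: "j < 0 \<Longrightarrow> bb j = 0" by (simp add: bb_def)
lemma bb_nat: "bb (int m) = real (seqA m) / fact m" by (simp add: bb_def)

lemma fact_cancel: "real (Suc k) * x / fact (Suc k) = x / (fact k :: real)"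
  by (simp add: fact_Suc[of k] del: fact_Suc)

lemma bb_rec: "of_int j * bb j = bb (j - 1) + 2 * bb (j - 2)"
proof (cases "j < 2")
  case True
  then consider "j < 0" | "j = 0" | "j = 1" by linarith
  then show ?thesis by cases (auto simp: bb_def)
next
  case False
  then obtain m where m: "j = int m + 2" by (metis add.commute le_add_diff_inverse nat_le_iff not_less zle_iff_zadd)
  have jj: "j = int (Suc (Suc m))" using m by simp
  have e1: "j - 1 = int (Suc m)" "j - 2 = int m" using m by auto
  have "of_int j * bb j = real (Suc (Suc m)) * (real (seqA (Suc (Suc m))) / fact (Suc (Suc m)))"
    unfolding jj bb_nat by (simp only: of_int_of_nat_eq)
  also have "\<dots> = real (seqA (Suc (Suc m))) / fact (Suc m)"
    by (simp only: times_divide_eq_right fact_cancel)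
  also have "real (seqA (Suc (Suc m))) = real (seqA (Suc m)) + real (Suc m) * (2 * real (seqA m))"
    by (simp add: algebra_simps)
  also have "(real (seqA (Suc m)) + real (Suc m) * (2 * real (seqA m))) / fact (Suc m)
      = real (seqA (Suc m)) / fact (Suc m) + 2 * (real (seqA m) / fact m)"
  proof -
    have "real (Suc m) * (2 * real (seqA m)) / fact (Suc m) = 2 * real (seqA m) / fact m"
      by (rule fact_cancel)
    then show ?thesis by (simp only: add_divide_distrib times_divide_eq_right)
  qed
  finally show ?thesis using e1 by (simp only: bb_nat)
qed

definition cc :: "nat \<Rightarrow> int \<Rightarrow> int \<Rightarrow> real" where
  "cc N m l = (\<Sum>k=0..N. bb (m - int k) * bb (l - int k) * 2 ^ k / fact k)"

lemma cc_sym: "cc N m l = cc N l m" by (simp add: cc_def mult.commute mult.left_commute)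

lemma cc_Suc: "int N \<ge> m \<Longrightarrow> cc (Suc N) m l = cc N m l"
  by (simp add: cc_def bb_neg)

lemma cc_key:
  assumes "int N \<ge> m"
  shows "(l + 1) * cc (Suc N) m (l + 1) = cc (Suc N) m l + 2 * cc (Suc N) m (l - 1) + 2 * cc (Suc N) (m - 1) l"
proof -
  define f where "f k = bb (m - int k) * bb (l + 1 - int k) * 2 ^ k / fact k" for k
  have split: "(of_int l + 1) * f k = bb (m - int k) * bb (l - int k) * 2 ^ k / fact k
       + 2 * (bb (m - int k) * bb (l - 1 - int k) * 2 ^ k / fact k) + real k * f k" for k
  proof -
    have "(of_int l + 1) * f k = of_int (l + 1 - int k) * bb (l + 1 - int k) * bb (m - int k) * 2 ^ k / fact k + real k * f k"
      by (simp add: f_def field_simps)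
    also have "of_int (l + 1 - int k) * bb (l + 1 - int k) = bb (l - int k) + 2 * bb (l - 1 - int k)"
      using bb_rec[of "l + 1 - int k"] by (simp add: algebra_simps)
    finally show ?thesis by (simp add: algebra_simps add_divide_distrib)
  qed
  have s2: "(\<Sum>k=0..Suc N. real k * f k) = 2 * cc N (m - 1) l"
  proof -
    have "(\<Sum>k=0..Suc N. real k * f k) = (\<Sum>k=0..N. real (Suc k) * f (Suc k))"
      by (subst sum.atLeast0_atMost_Suc_shift) simp
    also have "\<dots> = (\<Sum>k=0..N. 2 * (bb (m - 1 - int k) * bb (l - int k) * 2 ^ k / fact k))"
    proof (rule sum.cong)
      fix k assume "k \<in> {0..N}"
      have a: "m - int (Suc k) = m - 1 - int k" "l + 1 - int (Suc k) = l - int k" by auto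
      show "real (Suc k) * f (Suc k) = 2 * (bb (m - 1 - int k) * bb (l - int k) * 2 ^ k / fact k)"
        unfolding f_def a by (simp add: fact_Suc[of k] del: fact_Suc of_nat_Suc)
    qed simp
    finally show ?thesis by (simp add: cc_def sum_distrib_left)
  qed
  have "(of_int l + 1) * cc (Suc N) m (l + 1) = (\<Sum>k=0..Suc N. (of_int l + 1) * f k)"
    unfolding cc_def f_def by (simp only: sum_distrib_left)
  also have "\<dots> = cc (Suc N) m l + 2 * cc (Suc N) m (l - 1) + (\<Sum>k=0..Suc N. real k * f k)"
    by (simp only: split sum.distrib cc_def sum_distrib_left)
  also have "\<dots> = cc (Suc N) m l + 2 * cc (Suc N) m (l - 1) + 2 * cc N (m - 1) l"
    using s2 by simp
  also have "cc N (m - 1) l = cc (Suc N) (m - 1) l" using cc_Suc[of "m - 1" N l] assms by simp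
  finally show ?thesis .
qed

lemma cc_stable: "int N \<ge> m \<Longrightarrow> cc (N + d) m l = cc N m l"
proof (induction d)
  case (Suc d) then show ?case using cc_Suc[of m "N + d" l] by simp
qed simp

lemma bb0: "bb 0 = 1" by (simp add: bb_def)

lemma cc_zero: "cc N 0 l = bb l"
proof (induction N)
  case 0 show ?case by (simp add: cc_def bb0)
next
  case (Suc N) then show ?case using cc_Suc[of 0 N l] by simp
qed

lemma cc_main: "\<forall>l N. N \<ge> m + l \<longrightarrow> cc N (int m) (int l) = real ((m + l) choose m) * bb (int (m + l))"
proof (induction m)
  case 0 then show ?case by (simp add: cc_zero)
next
  case (Suc m)
  show ?case
  proof (intro allI impI)
    fix l N assume N: "N \<ge> Suc m + l"
    define N' where "N' = N - 1"
    have NN: "N = Suc N'" using N N'_def by simp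
    have mN: "int m \<le> int N'" "int l \<le> int N'" using N NN by simp_all
    have k1: "(of_int (int l) + 1) * cc (Suc N') (int m) (int l + 1) = cc (Suc N') (int m) (int l) + 2 * cc (Suc N') (int m) (int l - 1) + 2 * cc (Suc N') (int m - 1) (int l)"
      by (rule cc_key[OF mN(1)])
    have k2: "(of_int (int m) + 1) * cc (Suc N') (int l) (int m + 1) = cc (Suc N') (int l) (int m) + 2 * cc (Suc N') (int l) (int m - 1) + 2 * cc (Suc N') (int l - 1) (int m)"
      by (rule cc_key[OF mN(2)])
    have sy: "cc (Suc N') (int l) (int m + 1) = cc (Suc N') (int m + 1) (int l)"
      "cc (Suc N') (int l) (int m) = cc (Suc N') (int m) (int l)"
      "cc (Suc N') (int l) (int m - 1) = cc (Suc N') (int m - 1) (int l)"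
      "cc (Suc N') (int l - 1) (int m) = cc (Suc N') (int m) (int l - 1)"
      by (simp_all only: cc_sym)
    have "(of_int (int m) + 1) * cc (Suc N') (int m + 1) (int l) = (of_int (int l) + 1) * cc (Suc N') (int m) (int l + 1)"
      using k1 k2 unfolding sy by linarith
    moreover have "int (Suc m) = int m + 1" "int (Suc l) = int l + 1" by simp_all
    moreover have "(of_int (int m) + 1 :: real) = real (Suc m)" "(of_int (int l) + 1 :: real) = real (Suc l)" by simp_all
    ultimately have eq: "real (Suc m) * cc N (int (Suc m)) (int l) = real (Suc l) * cc N (int m) (int (Suc l))"
      unfolding NN by metis
    have ih: "cc N (int m) (int (Suc l)) = real ((m + Suc l) choose m) * bb (int (m + Suc l))"
      by (rule Suc.IH[rule_format]) (use N in simp)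
    have bin: "real (Suc m) * real ((Suc m + l) choose Suc m) = real (Suc l) * real ((m + Suc l) choose m)"
    proof -
      have "Suc m * ((Suc (m + l)) choose Suc m) = Suc (m + l) * ((m + l) choose m)"
        by (rule Suc_times_binomial)
      moreover have "Suc l * ((m + Suc l) choose m) = Suc (m + l) * ((m + l) choose m)"
      proof -
        have "(m + Suc l) choose m = (m + Suc l) choose (Suc l)" using binomial_symmetric[of m "m + Suc l"] by simp
        moreover have "(m + l) choose m = (m + l) choose l" using binomial_symmetric[of m "m+l"] by simp
        ultimately show ?thesis using Suc_times_binomial[of l "m + l"] by (simp add: add.commute)
      qed
      ultimately show ?thesis by (metis add_Suc add_Suc_right of_nat_mult)
    qed
    have B: "int (m + Suc l) = int (Suc m + l)" by simp
    have "real (Suc m) * cc N (int (Suc m)) (int l) = real (Suc l) * real ((m + Suc l) choose m) * bb (int (Suc m + l))"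
      by (simp only: eq ih B mult.assoc)
    also have "\<dots> = real (Suc m) * (real ((Suc m + l) choose Suc m) * bb (int (Suc m + l)))"
      by (simp only: bin[symmetric] mult.assoc)
    finally have "real (Suc m) * cc N (int (Suc m)) (int l) = real (Suc m) * (real ((Suc m + l) choose Suc m) * bb (int (Suc m + l)))" .
    then show "cc N (int (Suc m)) (int l) = real ((Suc m + l) choose Suc m) * bb (int (Suc m + l))"
      by simp
  qed
qed




definition inv_pm :: "('a \<Rightarrow> 'a) \<Rightarrow> 'a set \<Rightarrow> 'a set set set" where
  "inv_pm s V = {M. perfect_matching V M \<and> (\<lambda>e. s ` e) ` M = M}"

definition fpfi :: "('a \<Rightarrow> 'a) \<Rightarrow> 'a set \<Rightarrow> bool" where
  "fpfi s V \<longleftrightarrow> (\<forall>x\<in>V. s x \<in> V \<and> s x \<noteq> x \<and> s (s x) = x)"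

lemma pm_edge: "perfect_matching V M \<Longrightarrow> e \<in> M \<Longrightarrow> e \<subseteq> V \<and> card e = 2"
  by (simp add: perfect_matching_def)

lemma pm_ex1:
  assumes "perfect_matching V M" "v \<in> V"
  shows "\<exists>!e. e \<in> M \<and> v \<in> e"
proof -
  have "\<forall>v\<in>V. \<exists>!e. e \<in> M \<and> v \<in> e" using assms(1) unfolding perfect_matching_def by (rule conjunct2)
  then show ?thesis using assms(2) by (rule bspec)
qed

lemma pm_cover: "perfect_matching V M \<Longrightarrow> v \<in> V \<Longrightarrow> \<exists>e. e \<in> M \<and> v \<in> e"
  using pm_ex1 ex1_implies_ex by metis

lemma pm_unique:
  assumes "perfect_matching V M" "e \<in> M" "e' \<in> M" "v \<in> e" "v \<in> e'"
  shows "e = e'"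
proof -
  have vV: "v \<in> V" using pm_edge[OF assms(1,2)] assms(4) by blast
  from pm_ex1[OF assms(1) vV] show ?thesis
  proof (elim ex1E)
    fix x assume "x \<in> M \<and> v \<in> x" "\<forall>y. y \<in> M \<and> v \<in> y \<longrightarrow> y = x"
    then show ?thesis using assms(2-5) by blast
  qed
qed

lemma pm_intro:
  assumes "\<And>e. e \<in> M \<Longrightarrow> e \<subseteq> V \<and> card e = 2"
    and "\<And>v. v \<in> V \<Longrightarrow> \<exists>e. e \<in> M \<and> v \<in> e"
    and "\<And>v e e'. v \<in> V \<Longrightarrow> e \<in> M \<Longrightarrow> e' \<in> M \<Longrightarrow> v \<in> e \<Longrightarrow> v \<in> e' \<Longrightarrow> e = e'"
  shows "perfect_matching V M"
  unfolding perfect_matching_def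
proof (rule conjI)
  show "\<forall>e\<in>M. e \<subseteq> V \<and> card e = 2" using assms(1) by blast
  show "\<forall>v\<in>V. \<exists>!e. e \<in> M \<and> v \<in> e"
  proof (rule ballI)
    fix v assume v: "v \<in> V"
    then obtain e where e: "e \<in> M" "v \<in> e" using assms(2) by blast
    show "\<exists>!e. e \<in> M \<and> v \<in> e"
    proof (rule ex1I[of _ e])
      show "e \<in> M \<and> v \<in> e" using e by simp
      fix e' assume "e' \<in> M \<and> v \<in> e'"
      then show "e' = e" using assms(3)[OF v] e by blast
    qed
  qed
qed

lemma pm_remove:
  assumes pm: "perfect_matching V M" and e: "e \<in> M"
  shows "perfect_matching (V - e) (M - {e})"
proof (rule pm_intro)
  fix e' assume e': "e' \<in> M - {e}"
  have "e' \<subseteq> V" "card e' = 2" using pm_edge[OF pm] e' by auto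
  moreover have "e' \<inter> e = {}" using pm_unique[OF pm e] e' by blast
  ultimately show "e' \<subseteq> V - e \<and> card e' = 2" by blast
next
  fix v assume v: "v \<in> V - e"
  obtain e' where "e' \<in> M" "v \<in> e'" using pm_cover[OF pm] v by blast
  moreover have "e' \<noteq> e" using v \<open>v \<in> e'\<close> by blast
  ultimately show "\<exists>e'. e' \<in> M - {e} \<and> v \<in> e'" by blast
next
  fix v e1 e2 assume "e1 \<in> M - {e}" "e2 \<in> M - {e}" "v \<in> e1" "v \<in> e2"
  then show "e1 = e2" using pm_unique[OF pm] by blast
qed

lemma pm_insert:
  assumes pm: "perfect_matching W N" and d: "e \<inter> W = {}" and c: "card e = 2"
  shows "perfect_matching (W \<union> e) (insert e N)"
proof (rule pm_intro)
  fix e' assume "e' \<in> insert e N"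
  then show "e' \<subseteq> W \<union> e \<and> card e' = 2" using pm_edge[OF pm] c by auto
next
  fix v assume v: "v \<in> W \<union> e"
  show "\<exists>e'. e' \<in> insert e N \<and> v \<in> e'"
  proof (cases "v \<in> e")
    case True then show ?thesis by blast
  next
    case False
    then have "v \<in> W" using v by blast
    then show ?thesis using pm_cover[OF pm] by blast
  qed
next
  fix v e1 e2 assume h: "e1 \<in> insert e N" "e2 \<in> insert e N" "v \<in> e1" "v \<in> e2"
  have notin: "v \<notin> e" if "v \<in> e'" "e' \<in> N" for e'
    using pm_edge[OF pm that(2)] that(1) d by blast
  show "e1 = e2"
  proof (cases "e1 = e \<or> e2 = e")
    case True then show ?thesis using h notin by blast
  next
    case False then show ?thesis using h pm_unique[OF pm] by blast
  qed
qed

lemma pm_empty_edges: "perfect_matching V M \<Longrightarrow> e \<in> M \<Longrightarrow> e \<noteq> {}"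
  using pm_edge by fastforce

lemma finite_pm: "finite V \<Longrightarrow> finite {M. perfect_matching V M}"
proof -
  assume "finite V"
  then have "finite (Pow (Pow V))" by simp
  moreover have "{M. perfect_matching V M} \<subseteq> Pow (Pow V)" using pm_edge by blast
  ultimately show ?thesis using finite_subset by blast
qed

lemma fpfi_inv: "fpfi s V \<Longrightarrow> e \<subseteq> V \<Longrightarrow> s ` (s ` e) = e"
  unfolding fpfi_def image_image by (auto simp: image_iff) (metis subsetD)+

lemma fpfiD: "fpfi s V \<Longrightarrow> x \<in> V \<Longrightarrow> s x \<in> V \<and> s x \<noteq> x \<and> s (s x) = x"
  unfolding fpfi_def by (rule bspec)

lemma fpfi_inj: "fpfi s V \<Longrightarrow> inj_on s V"
  unfolding fpfi_def inj_on_def by metis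

lemma fpfi_imgV: "fpfi s V \<Longrightarrow> e \<subseteq> V \<Longrightarrow> s ` e \<subseteq> V"
  unfolding fpfi_def by blast

lemma fpfi_restrict:
  assumes "fpfi s V" "D \<subseteq> V" "s ` D \<subseteq> D"
  shows "fpfi s (V - D)"
  unfolding fpfi_def
proof
  fix z assume z: "z \<in> V - D"
  have "s z \<notin> D"
  proof
    assume "s z \<in> D"
    then have "s (s z) \<in> D" using assms(3) by blast
    then show False using z assms(1) unfolding fpfi_def by auto
  qed
  then show "s z \<in> V - D \<and> s z \<noteq> z \<and> s (s z) = z" using z assms(1) unfolding fpfi_def by auto
qed

lemma part_bij:
  assumes f: "fpfi s V" and eV: "e \<subseteq> V" and ce: "card e = 2"
    and alt: "s ` e = e \<or> s ` e \<inter> e = {}"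
  shows "bij_betw (\<lambda>M. M - {e, s ` e}) {M \<in> inv_pm s V. e \<in> M} (inv_pm s (V - (e \<union> s ` e)))"
proof (rule bij_betw_byWitness[where f' = "\<lambda>N. insert e (insert (s ` e) N)"])
  let ?S = "\<lambda>e. s ` e"
  have ssE: "s ` (s ` e) = e" using fpfi_inv[OF f eV] .
  have seV: "s ` e \<subseteq> V" using fpfi_imgV[OF f eV] .
  have cse: "card (s ` e) = 2" using ce card_image[OF inj_on_subset[OF fpfi_inj[OF f] eV]] by simp
  have injS: "inj_on ?S (Pow V)"
  proof (rule inj_onI)
    fix a b assume ab: "a \<in> Pow V" "b \<in> Pow V" "s ` a = s ` b"
    have "a = s ` (s ` a)" using fpfi_inv[OF f] ab(1) by simp
    also have "\<dots> = s ` (s ` b)" using ab(3) by simp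
    also have "\<dots> = b" using fpfi_inv[OF f] ab(2) by simp
    finally show "a = b" .
  qed
  have ne: "e \<noteq> {}" "s ` e \<noteq> {}" using ce by auto
  show "\<forall>M\<in>{M \<in> inv_pm s V. e \<in> M}. insert e (insert (s ` e) (M - {e, s ` e})) = M"
  proof
    fix M assume M: "M \<in> {M \<in> inv_pm s V. e \<in> M}"
    then have "s ` e \<in> M" unfolding inv_pm_def by blast
    then show "insert e (insert (s ` e) (M - {e, s ` e})) = M" using M by blast
  qed
  show "\<forall>N\<in>inv_pm s (V - (e \<union> s ` e)). insert e (insert (s ` e) N) - {e, s ` e} = N"
  proof
    fix N assume N: "N \<in> inv_pm s (V - (e \<union> s ` e))"
    then have pmN: "perfect_matching (V - (e \<union> s ` e)) N" unfolding inv_pm_def by blast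
    have "e \<notin> N"
    proof
      assume "e \<in> N"
      then have "e \<subseteq> V - (e \<union> s ` e)" using pm_edge[OF pmN] by blast
      then show False using ne by blast
    qed
    moreover have "s ` e \<notin> N"
    proof
      assume "s ` e \<in> N"
      then have "s ` e \<subseteq> V - (e \<union> s ` e)" using pm_edge[OF pmN] by blast
      then show False using ne by blast
    qed
    ultimately show "insert e (insert (s ` e) N) - {e, s ` e} = N" by blast
  qed
  show "(\<lambda>M. M - {e, s ` e}) ` {M \<in> inv_pm s V. e \<in> M} \<subseteq> inv_pm s (V - (e \<union> s ` e))"
  proof
    fix M' assume "M' \<in> (\<lambda>M. M - {e, s ` e}) ` {M \<in> inv_pm s V. e \<in> M}"
    then obtain M where M': "M' = M - {e, s ` e}" and pm: "perfect_matching V M"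
      and inv: "?S ` M = M" and eM: "e \<in> M" unfolding inv_pm_def by blast
    have seM: "s ` e \<in> M" using inv eM by blast
    have pm1: "perfect_matching (V - e) (M - {e})" by (rule pm_remove[OF pm eM])
    have pmM': "perfect_matching (V - (e \<union> s ` e)) M'"
    proof (cases "s ` e = e")
      case True then show ?thesis using pm1 M' by simp
    next
      case False
      then have "s ` e \<in> M - {e}" using seM by blast
      from pm_remove[OF pm1 this] have "perfect_matching (V - e - s ` e) (M - {e} - {s ` e})" .
      moreover have "V - e - s ` e = V - (e \<union> s ` e)" by blast
      moreover have "M - {e} - {s ` e} = M'" using M' by blast
      ultimately show ?thesis by simp
    qed
    have MV: "M \<subseteq> Pow V" using pm_edge[OF pm] by blast
    have "?S ` M' = ?S ` M - ?S ` {e, s ` e}"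
      unfolding M' by (rule inj_on_image_set_diff[OF injS]) (use MV eV seV in auto)
    also have "?S ` {e, s ` e} = {e, s ` e}" using ssE by auto
    also have "?S ` M - {e, s ` e} = M - {e, s ` e}" using inv by simp
    finally show "M' \<in> inv_pm s (V - (e \<union> s ` e))" using pmM' M' unfolding inv_pm_def by simp
  qed
  show "(\<lambda>N. insert e (insert (s ` e) N)) ` inv_pm s (V - (e \<union> s ` e)) \<subseteq> {M \<in> inv_pm s V. e \<in> M}"
  proof
    fix M assume "M \<in> (\<lambda>N. insert e (insert (s ` e) N)) ` inv_pm s (V - (e \<union> s ` e))"
    then obtain N where M: "M = insert e (insert (s ` e) N)" and pmN: "perfect_matching (V - (e \<union> s ` e)) N"
      and inv: "?S ` N = N" unfolding inv_pm_def by blast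
    have "perfect_matching V M"
    proof (cases "s ` e = e")
      case True
      then have "perfect_matching ((V - e) \<union> e) (insert e N)"
        using pm_insert[of "V - e" N e] pmN ce by simp
      moreover have "(V - e) \<union> e = V" using eV by blast
      ultimately show ?thesis using M True by simp
    next
      case False
      then have dis: "s ` e \<inter> e = {}" using alt by blast
      have p1: "perfect_matching ((V - (e \<union> s ` e)) \<union> s ` e) (insert (s ` e) N)"
        by (rule pm_insert[OF pmN _ cse]) blast
      have p2: "perfect_matching (((V - (e \<union> s ` e)) \<union> s ` e) \<union> e) (insert e (insert (s ` e) N))"
        by (rule pm_insert[OF p1 _ ce]) (use dis in blast)
      moreover have "((V - (e \<union> s ` e)) \<union> s ` e) \<union> e = V" using eV seV by blast
      ultimately show ?thesis using M by simp
    qed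
    moreover have "?S ` M = M" unfolding M using inv ssE by (simp add: insert_commute)
    ultimately show "M \<in> {M \<in> inv_pm s V. e \<in> M}" using M unfolding inv_pm_def by simp
  qed
qed

lemma edge_same:
  assumes "perfect_matching V M" "M \<in> inv_pm s V" "{x, y} \<in> M" "{x, y'} \<in> M" "y \<noteq> x" "y' \<noteq> x"
  shows "y = y'"
proof -
  have "{x, y} = {x, y'}" using pm_unique[OF assms(1) assms(3) assms(4), of x] by simp
  then show ?thesis using assms(5,6) by (metis doubleton_eq_iff)
qed

lemma count_main:
  assumes "finite V" "card V = 2*m" "fpfi s V"
  shows "card (inv_pm s V) = seqA m"
  using assms
proof (induction m arbitrary: V rule: less_induct)
  case (less m V)
  show ?case
  proof (cases m)
    case 0
    then have V0: "V = {}" using less by simp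
    have "inv_pm s V = {{}}"
    proof
      show "inv_pm s V \<subseteq> {{}}"
      proof
        fix M assume "M \<in> inv_pm s V"
        then have pm: "perfect_matching {} M" using V0 unfolding inv_pm_def by simp
        have "M = {}"
        proof (rule ccontr)
          assume "M \<noteq> {}"
          then obtain e where "e \<in> M" by blast
          then show False using pm_edge[OF pm] by fastforce
        qed
        then show "M \<in> {{}}" by simp
      qed
      show "{{}} \<subseteq> inv_pm s V" using V0 unfolding inv_pm_def perfect_matching_def by simp
    qed
    then show ?thesis using 0 by simp
  next
    case (Suc k)
    have fV: "finite V" and cV: "card V = 2 * m" and f: "fpfi s V" using less.prems by auto
    have "V \<noteq> {}" using cV Suc by auto
    then obtain x where x: "x \<in> V" by blast
    have sx: "s x \<in> V" "s x \<noteq> x" "s (s x) = x" using fpfiD[OF f x] by auto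
    define P where "P y = {M \<in> inv_pm s V. {x, y} \<in> M}" for y
    define R where "R = V - {x, s x}"
    have finR: "finite R" using fV R_def by simp
    have cR: "card R = 2 * k" unfolding R_def using cV Suc x sx fV by (simp add: card_Diff_subset)
    have cover: "inv_pm s V = P (s x) \<union> (\<Union>y\<in>R. P y)"
    proof
      show "inv_pm s V \<subseteq> P (s x) \<union> (\<Union>y\<in>R. P y)"
      proof
        fix M assume M: "M \<in> inv_pm s V"
        then have pm: "perfect_matching V M" unfolding inv_pm_def by simp
        obtain e where e: "e \<in> M" "x \<in> e" using pm_cover[OF pm x] by blast
        then have "e \<subseteq> V" "card e = 2" using pm_edge[OF pm] by auto
        then obtain a b where ab: "e = {a, b}" "a \<noteq> b" by (meson card_2_iff)
        have "x = a \<or> x = b" using e(2) ab by blast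
        then obtain y where y: "e = {x, y}" "y \<noteq> x" using ab by (metis insert_commute)
        have yV: "y \<in> V" using y \<open>e \<subseteq> V\<close> by blast
        show "M \<in> P (s x) \<union> (\<Union>y\<in>R. P y)"
        proof (cases "y = s x")
          case True
          have "M \<in> P (s x)" unfolding P_def using M e y True by simp
          then show ?thesis by blast
        next
          case False
          then have "y \<in> R" using yV y R_def by auto
          moreover have "M \<in> P y" unfolding P_def using M e y by simp
          ultimately show ?thesis by blast
        qed
      qed
      show "P (s x) \<union> (\<Union>y\<in>R. P y) \<subseteq> inv_pm s V" unfolding P_def by blast
    qed
    have pmof: "M \<in> P y \<Longrightarrow> perfect_matching V M" for M y unfolding P_def inv_pm_def by simp
    have disj1: "P (s x) \<inter> (\<Union>y\<in>R. P y) = {}"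
    proof (rule ccontr)
      assume "P (s x) \<inter> (\<Union>y\<in>R. P y) \<noteq> {}"
      then obtain M y where M: "M \<in> P (s x)" "M \<in> P y" "y \<in> R" by blast
      then have "s x = y" using edge_same[OF pmof[OF M(1)], of s x "s x" y] sx R_def unfolding P_def by auto
      then show False using M(3) R_def by auto
    qed
    have disj2: "\<forall>y\<in>R. \<forall>y'\<in>R. y \<noteq> y' \<longrightarrow> P y \<inter> P y' = {}"
    proof (intro ballI impI)
      fix y y' assume yy: "y \<in> R" "y' \<in> R" "y \<noteq> y'"
      show "P y \<inter> P y' = {}"
      proof (rule ccontr)
        assume "P y \<inter> P y' \<noteq> {}"
        then obtain M where M: "M \<in> P y" "M \<in> P y'" by blast
        then have "y = y'" using edge_same[OF pmof[OF M(1)], of s x y y'] yy R_def unfolding P_def by auto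
        then show False using yy by simp
      qed
    qed
    have finP: "finite (P y)" for y
    proof -
      have "P y \<subseteq> {M. perfect_matching V M}" unfolding P_def inv_pm_def by auto
      then show ?thesis using finite_pm[OF fV] finite_subset by blast
    qed
    have c0: "card (P (s x)) = seqA k"
    proof -
      let ?e = "{x, s x}"
      have se: "s ` ?e = ?e" using sx by auto
      have ce: "card ?e = 2" using sx by simp
      have b: "bij_betw (\<lambda>M. M - {?e, s ` ?e}) (P (s x)) (inv_pm s (V - (?e \<union> s ` ?e)))"
        unfolding P_def by (rule part_bij[OF f]) (use x sx ce se in auto)
      have "V - (?e \<union> s ` ?e) = R" using se R_def by simp
      then have "card (P (s x)) = card (inv_pm s R)" using bij_betw_same_card[OF b] by simp
      also have "\<dots> = seqA k"
      proof (rule less.IH)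
        show "k < m" using Suc by simp
        show "finite R" by (rule finR)
        show "card R = 2 * k" by (rule cR)
        show "fpfi s R" unfolding R_def by (rule fpfi_restrict[OF f]) (use x sx in auto)
      qed
      finally show ?thesis .
    qed
    have c1: "card (P y) = seqA (k - 1)" if y: "y \<in> R" for y
    proof -
      let ?e = "{x, y}"
      have yV: "y \<in> V" "y \<noteq> x" "y \<noteq> s x" using y R_def by auto
      have sy: "s y \<in> V" "s y \<noteq> y" "s (s y) = y" using fpfiD[OF f yV(1)] by auto
      have syx: "s y \<noteq> x" using sy sx yV by metis
      have sysx: "s y \<noteq> s x" using sy sx yV by metis
      have se: "s ` ?e = {s x, s y}" by auto
      have ce: "card ?e = 2" using yV by simp
      have dis: "s ` ?e \<inter> ?e = {}" using se sx yV sy syx sysx by auto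
      have b: "bij_betw (\<lambda>M. M - {?e, s ` ?e}) (P y) (inv_pm s (V - (?e \<union> s ` ?e)))"
        unfolding P_def by (rule part_bij[OF f]) (use x yV ce dis in auto)
      define D where "D = {x, y, s x, s y}"
      have De: "?e \<union> s ` ?e = D" using se D_def by auto
      have DV: "D \<subseteq> V" using D_def x yV sx sy by auto
      have cD: "card D = 4" using D_def yV sx sy syx sysx by auto
      have k1: "k \<ge> 1"
      proof -
        have "card {x, s x, y} = 3" using yV sx by auto
        moreover have "card {x, s x, y} \<le> card V" using x sx yV fV by (intro card_mono) auto
        ultimately show ?thesis using cV Suc by simp
      qed
      have "card (P y) = card (inv_pm s (V - D))" using bij_betw_same_card[OF b] De by simp
      also have "\<dots> = seqA (k - 1)"
      proof (rule less.IH)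
        show "k - 1 < m" using Suc by simp
        show "finite (V - D)" using fV by simp
        show "card (V - D) = 2 * (k - 1)" using cV Suc DV cD fV k1 by (simp add: card_Diff_subset finite_subset)
        show "fpfi s (V - D)" by (rule fpfi_restrict[OF f DV]) (use D_def sx sy in auto)
      qed
      finally show ?thesis .
    qed
    have "card (inv_pm s V) = card (P (s x)) + card (\<Union>y\<in>R. P y)"
      unfolding cover by (rule card_Un_disjoint) (use finP finR disj1 in auto)
    also have "card (\<Union>y\<in>R. P y) = (\<Sum>y\<in>R. card (P y))"
      by (rule card_UN_disjoint) (use finP finR disj2 in auto)
    also have "\<dots> = (\<Sum>y\<in>R. seqA (k - 1))" using c1 by simp
    also have "\<dots> = 2 * k * seqA (k - 1)" using cR by simp
    finally have "card (inv_pm s V) = seqA k + 2 * k * seqA (k - 1)" using c0 by simp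
    then show ?thesis using Suc by (cases k) auto
  qed
qed



section \<open>Symmetric diagrams\<close>

lemma fpfi_refl: "fpfi (refl_dot n) (dots n)"
  unfolding fpfi_def
proof
  fix x assume x: "x \<in> dots n"
  obtain j e where xe: "x = (j, e)" by (cases x)
  have j: "1 \<le> j" "j \<le> 2 * n" using x xe unfolding dots_def by auto
  have e: "e \<in> {0, 1}" using x xe unfolding dots_def by auto
  have r: "refl_dot n x = (2 * n + 1 - j, e)" using xe unfolding refl_dot_def by simp
  have "refl_dot n x \<in> dots n" using r j e unfolding dots_def by auto
  moreover have "2 * n + 1 - j \<noteq> j" using j by presburger
  then have "refl_dot n x \<noteq> x" using r xe by simp
  moreover have "refl_dot n (refl_dot n x) = x" using r xe j unfolding refl_dot_def by auto
  ultimately show "refl_dot n x \<in> dots n \<and> refl_dot n x \<noteq> x \<and> refl_dot n (refl_dot n x) = x" by blast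
qed

lemma rank_eq: "rank_SBr n = seqA (2 * n)"
proof -
  have "sym_brauer_diagrams n = inv_pm (refl_dot n) (dots n)"
    unfolding sym_brauer_diagrams_def brauer_diagrams_def inv_pm_def by simp
  moreover have "finite (dots n)" unfolding dots_def by simp
  moreover have "card (dots n) = 2 * (2 * n)" unfolding dots_def by (simp add: card_cartesian_product)
  ultimately show ?thesis unfolding rank_SBr_def using count_main[OF _ _ fpfi_refl] by simp
qed

section \<open>The explicit sum\<close>

definition SS :: "nat \<Rightarrow> (nat \<times> nat) set" where
  "SS i = {(p, q). p + 2 * q = i}"

definition sfun :: "nat \<Rightarrow> real" where
  "sfun i = (\<Sum>(p, q) \<in> SS i. 1 / (fact p * fact q))"

lemma finite_SS: "finite (SS i)"
proof -
  have "SS i \<subseteq> {0..i} \<times> {0..i}" unfolding SS_def by auto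
  then show ?thesis using finite_subset by blast
qed

lemma SS0: "SS 0 = {(0, 0)}" unfolding SS_def by auto
lemma SS1: "SS (Suc 0) = {(Suc 0, 0)}"
proof -
  have "p + 2*q = Suc 0 \<longleftrightarrow> p = Suc 0 \<and> q = 0" for p q :: nat by arith
  then show ?thesis unfolding SS_def by auto
qed

lemma sum_p:
  "(\<Sum>(p, q) \<in> SS (Suc i). real p / (fact p * fact q)) = sfun i"
proof -
  let ?g = "\<lambda>(p, q). real p / (fact p * fact q) :: real"
  let ?f = "\<lambda>(p::nat, q::nat). (Suc p, q)"
  define T where "T = {x \<in> SS (Suc i). fst x > 0}"
  have img: "?f ` SS i = T"
  proof
    show "?f ` SS i \<subseteq> T" unfolding T_def SS_def by auto
    show "T \<subseteq> ?f ` SS i"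
    proof
      fix x assume x: "x \<in> T"
      obtain p q where xpq: "x = (p, q)" by (cases x)
      have "p > 0" "p + 2 * q = Suc i" using x xpq unfolding T_def SS_def by auto
      then have "(p - 1, q) \<in> SS i" "?f (p - 1, q) = x" unfolding SS_def using xpq by auto
      then show "x \<in> ?f ` SS i" by (metis image_eqI)
    qed
  qed
  have inj: "inj_on ?f (SS i)" by (auto simp: inj_on_def)
  have "(\<Sum>x \<in> SS (Suc i). ?g x) = (\<Sum>x \<in> T. ?g x)"
    by (rule sum.mono_neutral_right) (auto simp: T_def finite_SS)
  also have "\<dots> = (\<Sum>x \<in> SS i. ?g (?f x))"
    unfolding img[symmetric] by (rule sum.reindex[OF inj, unfolded comp_def])
  also have "\<dots> = sfun i"
    unfolding sfun_def
  proof (rule sum.cong)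
    fix x assume "x \<in> SS i"
    obtain p q where xpq: "x = (p, q)" by (cases x)
    have "real (Suc p) / (fact (Suc p) * fact q) = 1 / (fact p * fact q)"
      by (simp add: fact_Suc[of p] del: fact_Suc)
    then show "?g (?f x) = (case x of (p, q) \<Rightarrow> 1 / (fact p * fact q))" using xpq by simp
  qed simp
  finally show ?thesis .
qed

lemma sum_q:
  "(\<Sum>(p, q) \<in> SS (Suc (Suc i)). real q / (fact p * fact q)) = sfun i"
proof -
  let ?g = "\<lambda>(p, q). real q / (fact p * fact q) :: real"
  let ?f = "\<lambda>(p::nat, q::nat). (p, Suc q)"
  define T where "T = {x \<in> SS (Suc (Suc i)). snd x > 0}"
  have img: "?f ` SS i = T"
  proof
    show "?f ` SS i \<subseteq> T" unfolding T_def SS_def by auto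
    show "T \<subseteq> ?f ` SS i"
    proof
      fix x assume x: "x \<in> T"
      obtain p q where xpq: "x = (p, q)" by (cases x)
      have "q > 0" "p + 2 * q = Suc (Suc i)" using x xpq unfolding T_def SS_def by auto
      then have "(p, q - 1) \<in> SS i" "?f (p, q - 1) = x" unfolding SS_def using xpq by auto
      then show "x \<in> ?f ` SS i" by (metis image_eqI)
    qed
  qed
  have inj: "inj_on ?f (SS i)" by (auto simp: inj_on_def)
  have "(\<Sum>x \<in> SS (Suc (Suc i)). ?g x) = (\<Sum>x \<in> T. ?g x)"
    by (rule sum.mono_neutral_right) (auto simp: T_def finite_SS)
  also have "\<dots> = (\<Sum>x \<in> SS i. ?g (?f x))"
    unfolding img[symmetric] by (rule sum.reindex[OF inj, unfolded comp_def])
  also have "\<dots> = sfun i"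
    unfolding sfun_def
  proof (rule sum.cong)
    fix x assume "x \<in> SS i"
    obtain p q where xpq: "x = (p, q)" by (cases x)
    have "real (Suc q) / (fact p * fact (Suc q)) = 1 / (fact p * fact q)"
      by (simp add: fact_Suc[of q] del: fact_Suc)
    then show "?g (?f x) = (case x of (p, q) \<Rightarrow> 1 / (fact p * fact q))" using xpq by simp
  qed simp
  finally show ?thesis .
qed

lemma sfun_rec: "real (Suc (Suc i)) * sfun (Suc (Suc i)) = sfun (Suc i) + 2 * sfun i"
proof -
  have "real (Suc (Suc i)) * sfun (Suc (Suc i)) = (\<Sum>(p, q) \<in> SS (Suc (Suc i)). real (Suc (Suc i)) * (1 / (fact p * fact q)))"
    unfolding sfun_def sum_distrib_left by (simp add: case_prod_beta)
  also have "\<dots> = (\<Sum>(p, q) \<in> SS (Suc (Suc i)). real p / (fact p * fact q) + 2 * (real q / (fact p * fact q)))"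
  proof (rule sum.cong)
    fix x assume x: "x \<in> SS (Suc (Suc i))"
    obtain p q where xpq: "x = (p, q)" by (cases x)
    have "real (Suc (Suc i)) = real p + 2 * real q" using x xpq unfolding SS_def by auto
    then show "(case x of (p, q) \<Rightarrow> real (Suc (Suc i)) * (1 / (fact p * fact q))) =
      (case x of (p, q) \<Rightarrow> real p / (fact p * fact q) + 2 * (real q / (fact p * fact q)))"
      using xpq by (simp add: field_simps)
  qed simp
  also have "\<dots> = (\<Sum>(p, q) \<in> SS (Suc (Suc i)). real p / (fact p * fact q)) + 2 * (\<Sum>(p, q) \<in> SS (Suc (Suc i)). real q / (fact p * fact q))"
    by (simp add: sum.distrib sum_distrib_left case_prod_beta)
  also have "\<dots> = sfun (Suc i) + 2 * sfun i" by (simp only: sum_p sum_q)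
  finally show ?thesis .
qed

lemma sfun_bb: "sfun i = bb (int i)"
proof (induction i rule: less_induct)
  case (less i)
  show ?case
  proof (cases "i < 2")
    case True
    then consider "i = 0" | "i = 1" by linarith
    then show ?thesis
      by cases (simp_all add: sfun_def SS0 SS1 bb_def)
  next
    case False
    then obtain j where j: "i = Suc (Suc j)" by (metis add_2_eq_Suc le_add_diff_inverse not_less)
    have "real i * sfun i = sfun (Suc j) + 2 * sfun j" using sfun_rec j by simp
    also have "\<dots> = bb (int i - 1) + 2 * bb (int i - 2)"
      using less.IH[of j] less.IH[of "Suc j"] j by simp
    also have "\<dots> = real i * bb (int i)" using bb_rec[of "int i"] by simp
    finally show ?thesis using j by simp
  qed
qed

lemma inner_eq:
  "(\<Sum>(p, q) \<in> {(p, q). p + 2*q = i}. fact n / (fact p * fact q * fact (n - i)) :: real)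
     = fact n / fact (n - i) * bb (int i)"
proof -
  have "(\<Sum>(p, q) \<in> {(p, q). p + 2*q = i}. fact n / (fact p * fact q * fact (n - i)) :: real)
      = (\<Sum>(p, q) \<in> SS i. fact n / fact (n - i) * (1 / (fact p * fact q)))"
    unfolding SS_def by (rule sum.cong) (auto simp: field_simps)
  also have "\<dots> = fact n / fact (n - i) * sfun i"
    unfolding sfun_def sum_distrib_left by (simp add: case_prod_beta)
  finally show ?thesis using sfun_bb by simp
qed

lemma identity:
  "real (seqA (2*n)) =
      (\<Sum>i = 0..n.
        (\<Sum>(p, q) \<in> {(p, q). p + 2*q = i}.
            fact n / (fact p * fact q * fact (n - i))) ^ 2
        * 2 ^ (n - i) * fact (n - i))"
proof -
  have cm: "cc (n + n) (int n) (int n) = real ((n + n) choose n) * bb (int (n + n))"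
    using cc_main[of n] by simp
  have cs: "cc (n + n) (int n) (int n) = cc n (int n) (int n)" by (rule cc_stable) simp
  have fl: "fact (n + n) = (fact n * fact n * real ((n + n) choose n) :: real)"
  proof -
    have nn: "n + n - n = n" by simp
    have h: "fact n * fact n * ((n + n) choose n) = (fact (n + n) :: nat)"
      using binomial_fact_lemma[of n "n + n"] unfolding nn by simp
    have "(of_nat (fact n * fact n * ((n + n) choose n)) :: real) = of_nat (fact (n + n))"
      using h by (rule arg_cong)
    then show ?thesis by (simp only: of_nat_mult of_nat_fact)
  qed
  have bn: "bb (int (n + n)) = real (seqA (n + n)) / fact (n + n)" by (rule bb_nat)
  have "real (seqA (2*n)) = fact (n + n) * bb (int (n + n))"
    unfolding bn mult_2 by simp
  also have "\<dots> = fact n * fact n * cc n (int n) (int n)"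
    using fl cm cs by simp
  also have "cc n (int n) (int n) = (\<Sum>k=0..n. bb (int n - int k) * bb (int n - int k) * 2 ^ k / fact k)"
    unfolding cc_def ..
  also have "\<dots> = (\<Sum>i=0..n. bb (int n - int (n + 0 - i)) * bb (int n - int (n + 0 - i)) * 2 ^ (n + 0 - i) / fact (n + 0 - i))"
    by (rule sum.atLeastAtMost_rev)
  also have "\<dots> = (\<Sum>i=0..n. bb (int i) * bb (int i) * 2 ^ (n - i) / fact (n - i))"
    by (rule sum.cong) (auto simp: of_nat_diff)
  also have "fact n * fact n * \<dots> = (\<Sum>i=0..n. (fact n / fact (n - i) * bb (int i)) ^ 2 * 2 ^ (n - i) * fact (n - i))"
    unfolding sum_distrib_left
  proof (rule sum.cong)
    fix i assume "i \<in> {0..n}"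
    have nz: "(fact (n - i) :: real) \<noteq> 0" by simp
    show "fact n * fact n * (bb (int i) * bb (int i) * 2 ^ (n - i) / fact (n - i)) =
      (fact n / fact (n - i) * bb (int i)) ^ 2 * 2 ^ (n - i) * fact (n - i)"
      using nz by (simp add: field_simps power2_eq_square)
  qed simp
  also have "\<dots> = (\<Sum>i = 0..n.
        (\<Sum>(p, q) \<in> {(p, q). p + 2*q = i}.
            fact n / (fact p * fact q * fact (n - i))) ^ 2
        * 2 ^ (n - i) * fact (n - i))"
    by (simp only: inner_eq)
  finally show ?thesis .
qed

theorem mainTheorem3:
  fixes n :: nat
  assumes "n \<ge> 1"
  shows "rank_SBr n = seqA (2*n) \<and>
    real (seqA (2*n)) =
      (\<Sum>i = 0..n.
        (\<Sum>(p, q) \<in> {(p, q). p + 2*q = i}.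
            fact n / (fact p * fact q * fact (n - i))) ^ 2
        * 2 ^ (n - i) * fact (n - i))"
  using rank_eq identity by blast

end
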